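(* (1) Suppose $\psi(x)\ge c_0x$ on $[0,1]$ for some $c_0>0$. If $(x_N,x_T)\in\mathbb C^2$ with $|x_N|\le\min(1,c_0)|x_T|$, then for every $\delta\in(0,\delta_0]$, \[ |x_T|\le\kappa_{G_\psi}(p_\delta;(x_N,x_T))\le\max\left(1,\frac{|x_N|}{|x_T|}\cdot\frac{1}{1-\delta}\right)|x_T|. \] (2) Suppose $\frac{\psi(x)}{x}$ is a strictly increasing function on $(0,1)$, and let $\delta^*$ be the unique solution of $1-\delta=\frac{\delta}{\psi^{-1}(\delta)}$. If $0<\delta\le\delta^*$ and $|x_N|\le\min\left(1,\frac{\delta}{\psi^{-1}(\delta)}\right)|x_T|$, then $\kappa_{G_\psi}(p_\delta;(x_N,x_T))=|x_T|$.
   Context: $\mathbb D$ is the unit disc in $\mathbb C$. $\psi:[0,1]\to[0,\infty)$ is continuous with $\psi(0)=0$, $\psi(1)>0$, and $G_\psi:=\{z\in\mathbb D^2:\Re z_1<\psi(|z_2|)\}$. For $\delta\in(0,1)$, $p_\delta:=(-\delta,0)$. Standing assumption: $\delta\in(0,\delta_0]$ for a fixed $\delta_0<1$; $\psi^{-1}$ is the inverse of $\psi$ (defined where used). The Kobayashi–Royden metric of a domain $\Omega\subset\mathbb C^d$ is $\kappa_\Omega(z;X)=\inf\{\lambda^{-1}:\lambda>0,\ \exists\varphi:\mathbb D\to\Omega \text{ holomorphic},\ \varphi(0)=z,\ \varphi'(0)=\lambda X\}$. *)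

theory Defs
  imports "HOL-Analysis.Analysis"
begin

definition G :: "(real \<Rightarrow> real) \<Rightarrow> (complex \<times> complex) set" where
  "G psi = {z. cmod (fst z) < 1 \<and> cmod (snd z) < 1 \<and> Re (fst z) < psi (cmod (snd z))}"

definition pdelta :: "real \<Rightarrow> complex \<times> complex" where
  "pdelta d = (- complex_of_real d, 0)"

text \<open>Kobayashi--Royden metric: a holomorphic map from the unit disc into C^2 is
  given by its two holomorphic component functions.\<close>
definition kobayashi :: "(complex \<times> complex) set \<Rightarrow> complex \<times> complex \<Rightarrow> complex \<times> complex \<Rightarrow> real" where
  "kobayashi \<Omega> z X = Inf {1 / l | l. l > 0 \<and>
     (\<exists>f g. f holomorphic_on ball 0 1 \<and> g holomorphic_on ball 0 1 \<and>
        (\<forall>w\<in>ball 0 1. (f w, g w) \<in> \<Omega>) \<and> (f 0, g 0) = z \<and>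
        deriv f 0 = complex_of_real l * fst X \<and> deriv g 0 = complex_of_real l * snd X)}"

definition psi_inv :: "(real \<Rightarrow> real) \<Rightarrow> real \<Rightarrow> real" where
  "psi_inv psi = the_inv_into {0..1} psi"

end

theory Submission
  imports Defs "HOL-Complex_Analysis.Conformal_Mappings"
begin

definition KS :: "(complex \<times> complex) set \<Rightarrow> complex \<times> complex \<Rightarrow> complex \<times> complex \<Rightarrow> real set" where
  "KS \<Omega> z X = {1 / l | l. l > 0 \<and>
     (\<exists>f g. f holomorphic_on ball 0 1 \<and> g holomorphic_on ball 0 1 \<and>
        (\<forall>w\<in>ball 0 1. (f w, g w) \<in> \<Omega>) \<and> (f 0, g 0) = z \<and>
        deriv f 0 = complex_of_real l * fst X \<and> deriv g 0 = complex_of_real l * snd X)}"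

lemma kob_KS: "kobayashi \<Omega> z X = Inf (KS \<Omega> z X)"
  by (simp add: kobayashi_def KS_def)

lemma KS_pos: "s \<in> KS \<Omega> z X \<Longrightarrow> s > 0"
  by (auto simp: KS_def)

lemma KS_bdd: "bdd_below (KS \<Omega> z X)"
  by (rule bdd_belowI[of _ 0]) (auto dest: KS_pos intro: less_imp_le)

lemma KS_lower:
  assumes "s \<in> KS (G psi) (pdelta d) (xN, xT)"
  shows "cmod xT \<le> s"
proof -
  obtain l f g where l: "l > 0" "s = 1/l" and hg: "g holomorphic_on ball 0 1"
    and inG: "\<forall>w\<in>ball 0 1. (f w, g w) \<in> G psi" and g0: "g 0 = 0"
    and dg: "deriv g 0 = complex_of_real l * xT"
    using assms by (auto simp: KS_def pdelta_def)
  have "\<And>z. norm z < 1 \<Longrightarrow> norm (g z) < 1"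
    using inG by (auto simp: G_def)
  then have "norm (deriv g 0) \<le> 1"
    using Schwarz_Lemma(2)[OF hg g0, of 0] by auto
  then have "l * cmod xT \<le> 1" using l by (simp add: dg norm_mult)
  then have "cmod xT \<le> 1 / l" using l by (simp add: pos_le_divide_eq mult.commute)
  then show ?thesis using l(2) by simp
qed

lemma KS_mem:
  assumes d: "0 < d" "d < 1" and l: "l > 0"
    and a: "cmod (complex_of_real l * xN) \<le> 1 - d"
    and b: "cmod (complex_of_real l * xT) \<le> 1"
    and c: "\<And>r. 0 \<le> r \<Longrightarrow> r < 1 \<Longrightarrow>
       - d + cmod (complex_of_real l * xN) * r < psi (cmod (complex_of_real l * xT) * r)"
  shows "1 / l \<in> KS (G psi) (pdelta d) (xN, xT)"
proof -
  define A where "A = complex_of_real l * xN"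
  define B where "B = complex_of_real l * xT"
  define f where "f = (\<lambda>w. - complex_of_real d + A * w)"
  define g where "g = (\<lambda>w. B * w)"
  have hf: "f holomorphic_on ball 0 1" unfolding f_def by (intro holomorphic_intros)
  have hg: "g holomorphic_on ball 0 1" unfolding g_def by (intro holomorphic_intros)
  have df: "deriv f 0 = A"
  proof -
    have "(f has_field_derivative A) (at 0)" unfolding f_def
      by (auto intro!: derivative_eq_intros)
    then show ?thesis by (rule DERIV_imp_deriv)
  qed
  have dg: "deriv g 0 = B"
  proof -
    have "(g has_field_derivative B) (at 0)" unfolding g_def
      by (auto intro!: derivative_eq_intros)
    then show ?thesis by (rule DERIV_imp_deriv)
  qed
  have inG: "(f w, g w) \<in> G psi" if w: "w \<in> ball 0 1" for w
  proof -
    have w1: "cmod w < 1" using w by auto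
    have "cmod (f w) \<le> d + cmod A * cmod w"
      unfolding f_def using norm_triangle_ineq4[of "- complex_of_real d" "A*w"] d
      by (smt (verit) norm_minus_cancel norm_mult norm_of_real norm_triangle_ineq)
    also have "\<dots> \<le> d + (1 - d) * cmod w"
      using mult_right_mono[OF a, of "cmod w"] unfolding A_def by simp
    also have "\<dots> < 1"
    proof -
      have h: "(1-d)*cmod w < 1-d" using mult_strict_left_mono[of "cmod w" 1 "1-d"] w1 d by simp
      show ?thesis using h by linarith
    qed
    finally have 1: "cmod (f w) < 1" .
    have "cmod (g w) = cmod B * cmod w" unfolding g_def by (simp add: norm_mult)
    also have "\<dots> \<le> cmod w" using b unfolding B_def
      by (simp add: mult_left_le_one_le)
    finally have 2: "cmod (g w) < 1" using w1 by simp
    have "Re (f w) = - d + Re (A * w)" unfolding f_def by simp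
    also have "\<dots> \<le> - d + cmod A * cmod w"
      using complex_Re_le_cmod[of "A*w"] by (simp add: norm_mult)
    also have "\<dots> < psi (cmod B * cmod w)"
      using c[of "cmod w"] w1 unfolding A_def B_def by simp
    also have "cmod B * cmod w = cmod (g w)" unfolding g_def by (simp add: norm_mult)
    finally show ?thesis using 1 2 by (simp add: G_def)
  qed
  have "(f 0, g 0) = pdelta d" unfolding f_def g_def pdelta_def by simp
  have "\<exists>f g. f holomorphic_on ball 0 1 \<and> g holomorphic_on ball 0 1 \<and>
        (\<forall>w\<in>ball 0 1. (f w, g w) \<in> G psi) \<and> (f 0, g 0) = pdelta d \<and>
        deriv f 0 = complex_of_real l * fst (xN, xT) \<and> deriv g 0 = complex_of_real l * snd (xN, xT)"
    by (rule exI[of _ f], rule exI[of _ g]) (use hf hg inG df dg \<open>(f 0, g 0) = pdelta d\<close> in \<open>auto simp: A_def B_def\<close>)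
  then show ?thesis unfolding KS_def using l by blast
qed

lemma kob_zero:
  assumes "0 < d" "d < 1" "psi 0 = 0"
  shows "kobayashi (G psi) (pdelta d) (0, 0) = 0"
proof -
  let ?S = "KS (G psi) (pdelta d) (0, 0)"
  have mem: "1 / l \<in> ?S" if "l > 0" for l
    by (rule KS_mem) (use assms that in auto)
  have ne: "?S \<noteq> {}" using mem[of 1] by auto
  have ge: "0 \<le> Inf ?S"
    by (rule cInf_greatest[OF ne]) (auto dest: KS_pos intro: less_imp_le)
  have le: "Inf ?S \<le> 1 / l" if "l > 0" for l
    by (rule cInf_lower[OF mem[OF that] KS_bdd])
  have "Inf ?S \<le> 0"
  proof (rule ccontr)
    assume "\<not> Inf ?S \<le> 0"
    then have p: "Inf ?S > 0" by simp
    have "Inf ?S \<le> 1 / (2 / Inf ?S)" using le[of "2 / Inf ?S"] p by simp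
    then show False using p by (simp add: field_simps)
  qed
  then show ?thesis using ge by (simp add: kob_KS)
qed

lemma kob_bounds:
  assumes "s \<in> KS (G psi) (pdelta d) (xN, xT)"
  shows "cmod xT \<le> kobayashi (G psi) (pdelta d) (xN, xT)"
    and "kobayashi (G psi) (pdelta d) (xN, xT) \<le> s"
proof -
  show "cmod xT \<le> kobayashi (G psi) (pdelta d) (xN, xT)"
    unfolding kob_KS using assms by (intro cInf_greatest KS_lower) auto
  show "kobayashi (G psi) (pdelta d) (xN, xT) \<le> s"
    unfolding kob_KS by (rule cInf_lower[OF assms KS_bdd])
qed

lemma lim_one:
  fixes h :: "real \<Rightarrow> real"
  assumes "continuous_on {0..1} h" "0 \<le> z" "z < 1" "\<forall>w\<in>{z<..<1}. c \<le> h w"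
  shows "c \<le> h 1"
proof -
  have "(h \<longlongrightarrow> h 1) (at 1 within {0..1})"
    using assms(1) by (simp add: continuous_on_def)
  then have "(h \<longlongrightarrow> h 1) (at 1 within {z<..<1})"
    by (rule tendsto_within_subset) (use assms in auto)
  note t = this
  have ev: "eventually (\<lambda>w. c \<le> h w) (at 1 within {z<..<1})"
    unfolding eventually_at_filter using assms(4) by auto
  have nb: "at 1 within {z<..<1} \<noteq> bot"
    using trivial_limit_within islimpt_greaterThanLessThan2[OF assms(3)] by auto
  show ?thesis by (rule tendsto_lowerbound[OF t ev nb])
qed

locale psiloc =
  fixes psi :: "real \<Rightarrow> real"
  assumes cont: "continuous_on {0..1} psi"
    and nonneg: "\<forall>x\<in>{0..1}. psi x \<ge> 0"
    and psi0: "psi 0 = 0"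
    and sm: "strict_mono_on {0<..<1} (\<lambda>x. psi x / x)"
begin

lemma ratio_less: "0 < x \<Longrightarrow> x < y \<Longrightarrow> y < 1 \<Longrightarrow> psi x / x < psi y / y"
  using sm by (auto simp: strict_mono_on_def)

lemma psi_pos: "0 < y \<Longrightarrow> y < 1 \<Longrightarrow> 0 < psi y"
proof -
  assume y: "0 < y" "y < 1"
  have "psi (y/2) / (y/2) < psi y / y" using y by (intro ratio_less) auto
  moreover have "0 \<le> psi (y/2) / (y/2)" using nonneg y by auto
  ultimately have "0 < psi y / y" by linarith
  then show ?thesis using y by (simp add: zero_less_divide_iff)
qed

lemma psi_less_lt1: "0 \<le> x \<Longrightarrow> x < y \<Longrightarrow> y < 1 \<Longrightarrow> psi x < psi y"
proof -
  assume xy: "0 \<le> x" "x < y" "y < 1"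
  show ?thesis
  proof (cases "x = 0")
    case True then show ?thesis using psi_pos[of y] xy psi0 by auto
  next
    case False
    then have x: "x > 0" using xy by auto
    have r: "psi x / x < psi y / y" using ratio_less x xy by auto
    have "psi x = x * (psi x / x)" using x by simp
    also have "\<dots> \<le> y * (psi x / x)"
      using xy nonneg x by (intro mult_right_mono) auto
    also have "\<dots> < y * (psi y / y)" using r xy x by (intro mult_strict_left_mono) auto
    also have "\<dots> = psi y" using xy x by simp
    finally show ?thesis .
  qed
qed

lemma psi_less: "0 \<le> x \<Longrightarrow> x < y \<Longrightarrow> y \<le> 1 \<Longrightarrow> psi x < psi y"
proof -
  assume xy: "0 \<le> x" "x < y" "y \<le> 1"
  show ?thesis
  proof (cases "y < 1")
    case True then show ?thesis using psi_less_lt1 xy by auto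
  next
    case False
    then have y: "y = 1" using xy by auto
    define z where "z = (x+1)/2"
    have z: "x < z" "z < 1" "0 \<le> z" using xy y by (auto simp: z_def)
    have "psi z \<le> psi 1"
      by (rule lim_one[OF cont z(3) z(2)]) (use psi_less_lt1 z in \<open>auto intro: less_imp_le\<close>)
    then show ?thesis using psi_less_lt1[OF xy(1) z(1) z(2)] y by simp
  qed
qed

lemma inj: "inj_on psi {0..1}"
proof (rule inj_onI)
  fix x y assume "x \<in> {0..1}" "y \<in> {0..1}" "psi x = psi y"
  then show "x = y" using psi_less[of x y] psi_less[of y x]
    by (metis atLeastAtMost_iff less_irrefl linorder_neqE_linordered_idom)
qed

lemma inv:
  assumes "0 < d" "d \<le> psi 1"
  shows "0 < psi_inv psi d" "psi_inv psi d \<le> 1" "psi (psi_inv psi d) = d"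
proof -
  obtain t where t: "0 \<le> t" "t \<le> 1" "psi t = d"
    using IVT'[of psi 0 d 1] cont psi0 assms by auto
  have pt: "psi_inv psi d = t" unfolding psi_inv_def using t
    by (metis atLeastAtMost_iff inj the_inv_into_f_f)
  show "psi (psi_inv psi d) = d" "psi_inv psi d \<le> 1" using pt t by auto
  show "0 < psi_inv psi d" using pt t psi0 assms
    by (metis order_le_less order_less_irrefl)
qed

lemma ratio_le1: "0 < t \<Longrightarrow> t < 1 \<Longrightarrow> psi t / t \<le> psi 1"
proof -
  assume t: "0 < t" "t < 1"
  have "0 \<le> psi 1 - 1 * (psi t / t)"
  proof (rule lim_one[where h = "\<lambda>w. psi w - w * (psi t / t)"])
    show "continuous_on {0..1} (\<lambda>w. psi w - w * (psi t / t))"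
      by (intro continuous_intros cont)
    show "\<forall>w\<in>{t<..<1}. 0 \<le> psi w - w * (psi t / t)"
    proof
      fix w assume w: "w \<in> {t<..<1}"
      then have "psi t / t < psi w / w" using ratio_less t by auto
      then have "w * (psi t / t) \<le> psi w" using w t by (simp add: field_simps)
      then show "0 \<le> psi w - w * (psi t / t)" by simp
    qed
  qed (use t in auto)
  then show ?thesis by simp
qed

lemma ratio_mono: "0 < t \<Longrightarrow> t \<le> s \<Longrightarrow> s \<le> 1 \<Longrightarrow> psi t / t \<le> psi s / s"
proof -
  assume ts: "0 < t" "t \<le> s" "s \<le> 1"
  show ?thesis
  proof (cases "t = s")
    case False
    then have ts2: "t < s" using ts by auto
    show ?thesis
    proof (cases "s < 1")
      case True then show ?thesis using ratio_less ts2 ts by (auto intro: less_imp_le)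
    next
      case False then have "s = 1" using ts by auto
      then show ?thesis using ratio_le1 ts ts2 by auto
    qed
  qed simp
qed

lemma key:
  assumes t: "0 < t" "t \<le> 1" "psi t = d" and d: "0 < d"
    and a: "0 \<le> a" "a \<le> d / t" and r: "0 \<le> r" "r < 1"
  shows "- d + a * r < psi r"
proof (cases "r < t")
  case True
  have "a * r \<le> d / t * r" using a r by (intro mult_right_mono) auto
  also have "d / t * r < d" using True t d by (simp add: field_simps)
  finally show ?thesis using nonneg r by force
next
  case False
  then have tr: "t \<le> r" by simp
  have "d / t \<le> psi r / r" using ratio_mono[of t r] t tr r by simp
  then have "r * (d / t) \<le> psi r" using t tr by (simp add: field_simps)
  moreover have "a * r \<le> d / t * r" using a r by (intro mult_right_mono) auto
  ultimately show ?thesis using d by (simp add: mult.commute)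
qed

end

theorem proposition2:
  fixes psi :: "real \<Rightarrow> real" and \<delta>0 :: real
  assumes "continuous_on {0..1} psi"
    and "\<forall>x\<in>{0..1}. psi x \<ge> 0"
    and "psi 0 = 0" and "psi 1 > 0"
    and "0 < \<delta>0" and "\<delta>0 < 1"
  shows
   "(\<forall>c0>0. (\<forall>x\<in>{0..1}. psi x \<ge> c0 * x) \<longrightarrow>
       (\<forall>xN xT \<delta>. 0 < \<delta> \<longrightarrow> \<delta> \<le> \<delta>0 \<longrightarrow> cmod xN \<le> min 1 c0 * cmod xT \<longrightarrow>
          cmod xT \<le> kobayashi (G psi) (pdelta \<delta>) (xN, xT) \<and>
          kobayashi (G psi) (pdelta \<delta>) (xN, xT)
            \<le> max 1 (cmod xN / cmod xT * (1 / (1 - \<delta>))) * cmod xT))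
    \<and>
    (strict_mono_on {0<..<1} (\<lambda>x. psi x / x) \<longrightarrow>
       (\<forall>\<delta>s. 0 < \<delta>s \<and> \<delta>s \<le> psi 1 \<and> 1 - \<delta>s = \<delta>s / psi_inv psi \<delta>s \<and>
              (\<forall>d. 0 < d \<and> d \<le> psi 1 \<and> 1 - d = d / psi_inv psi d \<longrightarrow> d = \<delta>s) \<longrightarrow>
          (\<forall>xN xT \<delta>. 0 < \<delta> \<longrightarrow> \<delta> \<le> \<delta>s \<longrightarrow> \<delta> \<le> \<delta>0 \<longrightarrow>
              cmod xN \<le> min 1 (\<delta> / psi_inv psi \<delta>) * cmod xT \<longrightarrow>
              kobayashi (G psi) (pdelta \<delta>) (xN, xT) = cmod xT)))"
proof (intro conjI allI impI)
  note A = assms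
  fix c0 :: real and xN xT :: complex and \<delta> :: real
  assume c0: "c0 > 0" and pc: "\<forall>x\<in>{0..1}. c0 * x \<le> psi x"
    and d: "0 < \<delta>" "\<delta> \<le> \<delta>0" and x: "cmod xN \<le> min 1 c0 * cmod xT"
  have d1: "\<delta> < 1" using d A by linarith
  have "cmod xT \<le> kobayashi (G psi) (pdelta \<delta>) (xN, xT) \<and>
          kobayashi (G psi) (pdelta \<delta>) (xN, xT)
            \<le> max 1 (cmod xN / cmod xT * (1 / (1 - \<delta>))) * cmod xT"
  proof (cases "xT = 0")
    case True
    then have "xN = 0" using x by (simp add: min_def split: if_splits)
    then show ?thesis using True kob_zero[of \<delta> psi, OF d(1) d1 A(3)] by simp
  next
    case False
    then have T: "cmod xT > 0" by simp
    define M where "M = max (cmod xT) (cmod xN / (1 - \<delta>))"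
    have M: "M > 0" "cmod xT \<le> M" "cmod xN / (1 - \<delta>) \<le> M" using T unfolding M_def by (auto simp: less_max_iff_disj)
    define l where "l = 1 / M"
    have l: "l > 0" using M by (simp add: l_def)
    have "min 1 c0 * cmod xT \<le> c0 * cmod xT" by (intro mult_right_mono) auto
    then have xN1: "cmod xN \<le> c0 * cmod xT" using x by linarith
    have nl: "\<And>z. cmod (complex_of_real l * z) = cmod z / M" using l M
        by (simp add: norm_mult norm_divide l_def)
    have "1 / l \<in> KS (G psi) (pdelta \<delta>) (xN, xT)"
    proof (rule KS_mem[OF d(1) d1 l])
      have "cmod xN \<le> M * (1 - \<delta>)" using M(3) d1 by (simp add: pos_divide_le_eq)
      then show "cmod (complex_of_real l * xN) \<le> 1 - \<delta>"
        unfolding nl using M(1) by (simp add: pos_divide_le_eq mult.commute)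
      show "cmod (complex_of_real l * xT) \<le> 1"
        unfolding nl using M by simp
      fix r :: real assume r: "0 \<le> r" "r < 1"
      have b1: "cmod (complex_of_real l * xT) \<le> 1"
        unfolding nl using M by simp
      have "cmod xN / M * r \<le> c0 * cmod xT / M * r"
        using xN1 M r by (intro mult_right_mono divide_right_mono) auto
      then have "cmod (complex_of_real l * xN) * r \<le> c0 * (cmod (complex_of_real l * xT) * r)"
        unfolding nl by simp
      also have "\<dots> \<le> psi (cmod (complex_of_real l * xT) * r)"
        using pc b1 r by (simp add: mult_le_one)
      finally show "- \<delta> + cmod (complex_of_real l * xN) * r < psi (cmod (complex_of_real l * xT) * r)"
        using d by linarith
    qed
    note bb = kob_bounds[OF this]
    have "1 / l = max 1 (cmod xN / cmod xT * (1 / (1 - \<delta>))) * cmod xT"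
      unfolding l_def M_def using T by (simp add: max_mult_distrib_right)
    then show ?thesis using bb by simp
  qed
  then show "cmod xT \<le> kobayashi (G psi) (pdelta \<delta>) (xN, xT)"
     "kobayashi (G psi) (pdelta \<delta>) (xN, xT)
            \<le> max 1 (cmod xN / cmod xT * (1 / (1 - \<delta>))) * cmod xT" by auto
next
  note A = assms
  assume sm: "strict_mono_on {0<..<1} (\<lambda>x. psi x / x)"
  interpret P: psiloc psi using A sm by unfold_locales auto
  fix \<delta>s :: real and xN xT :: complex and \<delta> :: real
  assume ds: "0 < \<delta>s \<and> \<delta>s \<le> psi 1 \<and> 1 - \<delta>s = \<delta>s / psi_inv psi \<delta>s \<and>
              (\<forall>d. 0 < d \<and> d \<le> psi 1 \<and> 1 - d = d / psi_inv psi d \<longrightarrow> d = \<delta>s)"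
    and d: "0 < \<delta>" "\<delta> \<le> \<delta>s" "\<delta> \<le> \<delta>0"
    and x: "cmod xN \<le> min 1 (\<delta> / psi_inv psi \<delta>) * cmod xT"
  have d1: "\<delta> < 1" using d A by linarith
  show "kobayashi (G psi) (pdelta \<delta>) (xN, xT) = cmod xT"
  proof (cases "xT = 0")
    case True
    then have "xN = 0" using x by (simp add: min_def split: if_splits)
    then show ?thesis using True kob_zero[of \<delta> psi, OF d(1) d1 A(3)] by simp
  next
    case False
    then have T: "cmod xT > 0" by simp
    define t where "t = psi_inv psi \<delta>"
    define ts where "ts = psi_inv psi \<delta>s"
    have dp: "\<delta> \<le> psi 1" using d ds by linarith
    have t: "0 < t" "t \<le> 1" "psi t = \<delta>" using P.inv[OF d(1) dp] by (auto simp: t_def)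
    have tsp: "0 < ts" "ts \<le> 1" "psi ts = \<delta>s" using P.inv[of \<delta>s] ds by (auto simp: ts_def)
    have "t \<le> ts"
    proof (rule ccontr)
      assume "\<not> t \<le> ts"
      then have "psi ts < psi t" using P.psi_less[of ts t] tsp t by auto
      then show False using t tsp d by simp
    qed
    then have "psi t / t \<le> psi ts / ts" using P.ratio_mono t tsp by auto
    then have dt: "\<delta> / t \<le> 1 - \<delta>" using t tsp ds d by (simp add: ts_def)
    define l where "l = 1 / cmod xT"
    have l: "l > 0" using T by (simp add: l_def)
    have aN: "cmod (complex_of_real l * xN) \<le> \<delta> / t"
    proof -
      have "cmod (complex_of_real l * xN) = cmod xN / cmod xT" using T by (simp add: l_def norm_mult norm_divide)
      also have "\<dots> \<le> min 1 (\<delta> / t)" by (subst pos_divide_le_eq[OF T]) (use x in \<open>simp only: t_def\<close>)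
      also have "\<dots> \<le> \<delta> / t" by simp
      finally show ?thesis .
    qed
    have "1 / l \<in> KS (G psi) (pdelta \<delta>) (xN, xT)"
    proof (rule KS_mem[OF d(1) d1 l])
      show "cmod (complex_of_real l * xN) \<le> 1 - \<delta>" using aN dt by linarith
      show "cmod (complex_of_real l * xT) \<le> 1" using T by (simp add: l_def norm_mult norm_divide)
      fix r :: real assume r: "0 \<le> r" "r < 1"
      have "cmod (complex_of_real l * xT) = 1" using T by (simp add: l_def norm_mult norm_divide)
      then show "- \<delta> + cmod (complex_of_real l * xN) * r < psi (cmod (complex_of_real l * xT) * r)"
        using P.key[OF t d(1) _ aN r] by simp
    qed
    note bb = kob_bounds[OF this]
    have "1 / l = cmod xT" by (simp add: l_def)
    then show ?thesis using bb by simp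
  qed
qed

end
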